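(* Let $V=\mathrm{GF}(2)^n$ with $n\in\{1,2\}$ and let $g:V^3\to\mathrm{GF}(2)$ be a trilinear form satisfying $g(x,y,z)=g(z,y,x)$ for all $x,y,z\in V$. Then there is $0\ne x\in V$ such that the induced bilinear form $g(x,-,-)$ is symmetric. *)

theory Defs
  imports "HOL-Analysis.Analysis" "HOL-Library.Z2"
begin

text \<open>GF(2) is the field type bit; V = GF(2)^n is bit ^ 'n with CARD('n) = n.\<close>

definition lin_form :: "('a::field ^ 'n \<Rightarrow> 'a) \<Rightarrow> bool" where
  "lin_form f \<longleftrightarrow> (\<forall>u v. f (u + v) = f u + f v) \<and> (\<forall>c u. f (c *s u) = c * f u)"

definition trilinear :: "('a::field ^ 'n \<Rightarrow> 'a ^ 'n \<Rightarrow> 'a ^ 'n \<Rightarrow> 'a) \<Rightarrow> bool" where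
  "trilinear g \<longleftrightarrow>
     (\<forall>y z. lin_form (\<lambda>x. g x y z)) \<and>
     (\<forall>x z. lin_form (\<lambda>y. g x y z)) \<and>
     (\<forall>x y. lin_form (\<lambda>z. g x y z))"

end

theory Submission
  imports Defs
begin

lemma decomp2:
  fixes y :: "'a::field ^ 'n"
  assumes "UNIV = {a, b}" "a \<noteq> b"
  shows "y = y$a *s axis a 1 + y$b *s axis b 1"
proof -
  have "i = a \<or> i = b" for i using assms(1) by auto
  then show ?thesis using assms(2) by (auto simp: vec_eq_iff axis_def)
qed

lemma decomp1:
  fixes y :: "'a::field ^ 'n"
  assumes "UNIV = {a}"
  shows "y = y$a *s axis a 1"
proof -
  show ?thesis unfolding vec_eq_iff
  proof
    fix i
    have "i = a" using assms(1) by auto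
    then show "y $ i = (y $ a *s axis a 1) $ i" by (simp add: axis_def)
  qed
qed

lemma bit_add0: "(u::bit) + v = 0 \<Longrightarrow> u = v"
proof -
  assume "u + v = 0"
  then have "u = - v" by (simp only: eq_neg_iff_add_eq_0)
  then show "u = v" by (simp only: uminus_bit_def id_apply)
qed

theorem lemma4p7:
  fixes g :: "bit ^ 'n \<Rightarrow> bit ^ 'n \<Rightarrow> bit ^ 'n \<Rightarrow> bit"
  assumes "CARD('n) = 1 \<or> CARD('n) = 2"
    and "trilinear g"
    and "\<And>x y z. g x y z = g z y x"
  shows "\<exists>x. x \<noteq> 0 \<and> (\<forall>y z. g x y z = g x z y)"
proof -
  have lx: "g (u + v) y z = g u y z + g v y z" for u v y z
    using assms(2) unfolding trilinear_def lin_form_def by blast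
  have ly: "g x (u + v) z = g x u z + g x v z" "g x (c *s u) z = c * g x u z" for x u v z c
    using assms(2) unfolding trilinear_def lin_form_def by blast+
  have lz: "g x y (u + v) = g x y u + g x y v" "g x y (c *s u) = c * g x y u" for x u v y c
    using assms(2) unfolding trilinear_def lin_form_def by blast+
  show ?thesis
  proof (cases "CARD('n) = 1")
    case True
    then obtain a :: 'n where a: "UNIV = {a}" by (metis card_1_singletonE)
    have "axis a (1::bit) \<noteq> 0" by (simp add: axis_eq_0_iff)
    moreover have "g x y z = g x z y" for x y z
    proof -
      have "g x y z = g x (y$a *s axis a 1) (z$a *s axis a 1)"
        using decomp1[OF a, of y] decomp1[OF a, of z] by simp
      also have "\<dots> = y$a * (z$a * g x (axis a 1) (axis a 1))" by (simp add: ly lz)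
      also have "\<dots> = g x (z$a *s axis a 1) (y$a *s axis a 1)" by (simp add: ly lz mult.left_commute)
      also have "\<dots> = g x z y"
        using decomp1[OF a, of y] decomp1[OF a, of z] by simp
      finally show ?thesis .
    qed
    ultimately show ?thesis by blast
  next
    case False
    then have "CARD('n) = 2" using assms(1) by simp
    then obtain a b :: 'n where ab: "UNIV = {a, b}" "a \<noteq> b" by (metis card_2_iff)
    define ea where "ea = axis a (1::bit)"
    define eb where "eb = axis b (1::bit)"
    have key: "g x y z = g x z y" if h: "g x ea eb = g x eb ea" for x y z
    proof -
      have e: "g x y z = y$a * (z$a * g x ea ea + z$b * g x ea eb) + y$b * (z$a * g x eb ea + z$b * g x eb eb)"
        for y z
      proof -
        have y: "y = y$a *s ea + y$b *s eb" and z: "z = z$a *s ea + z$b *s eb"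
          using decomp2[OF ab, of y] decomp2[OF ab, of z] by (simp_all add: ea_def eb_def)
        have z1: "g x w z = z$a * g x w ea + z$b * g x w eb" for w
          by (subst z) (simp only: lz)
        have "g x y z = y$a * g x ea z + y$b * g x eb z"
          by (subst y) (simp only: ly)
        then show ?thesis by (simp only: z1)
      qed
      have "g x y z = y$a * (z$a * g x ea ea + z$b * g x eb ea) + y$b * (z$a * g x eb ea + z$b * g x eb eb)"
        using e[of y z] h by (simp del: add_bit_eq_xor mult_bit_eq_and)
      moreover have "g x z y = z$a * (y$a * g x ea ea + y$b * g x eb ea) + z$b * (y$a * g x eb ea + y$b * g x eb eb)"
        using e[of z y] h by (simp del: add_bit_eq_xor mult_bit_eq_and)
      ultimately show ?thesis by (simp only:) (simp only: algebra_simps)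
    qed
    define p where "p = g ea ea eb + g ea eb ea"
    define q where "q = g eb ea eb + g eb eb ea"
    have nz: "ea \<noteq> 0" "eb \<noteq> 0" "ea + eb \<noteq> 0"
      using ab(2) by (auto simp: ea_def eb_def axis_eq_0_iff vec_eq_iff axis_def)
    show ?thesis
    proof (cases "p = 0")
      case True
      then have "g ea ea eb = g ea eb ea" unfolding p_def
        by (rule bit_add0)
      then show ?thesis using key nz by blast
    next
      case pF: False
      show ?thesis
      proof (cases "q = 0")
        case True
        then have "g eb ea eb = g eb eb ea" unfolding q_def by (rule bit_add0)
        then show ?thesis using key nz by blast
      next
        case False
        then have "p = 1" "q = 1" using pF by simp_all
        then have "p + q = 0" by (simp add: one_add_one)
        have "g (ea + eb) ea eb = g (ea + eb) eb ea" unfolding lx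
        proof (rule bit_add0)
          have "g ea ea eb + g eb ea eb + (g ea eb ea + g eb eb ea) = p + q"
            unfolding p_def q_def by (simp only: ac_simps)
          then show "g ea ea eb + g eb ea eb + (g ea eb ea + g eb eb ea) = 0"
            using \<open>p + q = 0\<close> by (simp only:)
        qed
        then show ?thesis using key nz by blast
      qed
    qed
  qed
qed

end
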